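(* Let $V=\{n\in\mathbb{Z} : n\geq 2,\ 5\nmid n\}$ and let $\Gamma_5$ be the directed graph on $V$ with up-edges $(n,(n+5)^2)$ for $n\in V$ and down-edges $(n^2,n)$ for $n\in V$. Then no path in $\Gamma_5$ contains $UUDD$ as a subpath; that is, there do not exist vertices $x,a,z,b,y\in V$ such that $(x,a)$ and $(a,z)$ are up-edges and $(z,b)$ and $(b,y)$ are down-edges (equivalently, $a=(x+5)^2$, $z=(a+5)^2$, $z=b^2$, $b=y^2$).
   Context: Each edge of a path is labelled $U$ if it is an up-edge and $D$ if it is a down-edge; a path contains $UUDD$ as a subpath if it has four consecutive edges labelled $U,U,D,D$. *)

theory Defs
  imports Main
begin

definition V5 :: "int set" where
  "V5 = {n. n \<ge> 2 \<and> \<not> (5 dvd n)}"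

definition up_edge5 :: "int \<Rightarrow> int \<Rightarrow> bool" where
  "up_edge5 u v \<longleftrightarrow> u \<in> V5 \<and> v = (u + 5)^2"

definition down_edge5 :: "int \<Rightarrow> int \<Rightarrow> bool" where
  "down_edge5 u v \<longleftrightarrow> v \<in> V5 \<and> u = v^2"

end

theory Submission
  imports Defs
begin

theorem theorem7:
  shows "\<not> (\<exists>x a z b y. x \<in> V5 \<and> a \<in> V5 \<and> z \<in> V5 \<and> b \<in> V5 \<and> y \<in> V5 \<and>
            up_edge5 x a \<and> up_edge5 a z \<and> down_edge5 z b \<and> down_edge5 b y)"
proof
  assume "\<exists>x a z b y. x \<in> V5 \<and> a \<in> V5 \<and> z \<in> V5 \<and> b \<in> V5 \<and> y \<in> V5 \<and>
            up_edge5 x a \<and> up_edge5 a z \<and> down_edge5 z b \<and> down_edge5 b y"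
  then obtain x a z b y where h: "x \<in> V5" "a \<in> V5" "b \<in> V5" "y \<in> V5"
    "a = (x+5)^2" "z = (a+5)^2" "z = b^2" "b = y^2"
    unfolding up_edge5_def down_edge5_def by blast
  have pos: "x \<ge> 2" "a \<ge> 2" "b \<ge> 2" "y \<ge> 2" using h(1-4) by (auto simp: V5_def)
  have "(a+5)^2 = b^2" using h by simp
  hence "a + 5 = b" using pos by (smt (verit) power2_eq_iff)
  hence eq: "y^2 = (x+5)^2 + 5" using h by simp
  define c where "c = x + 5"
  have c7: "c \<ge> 7" using pos c_def by simp
  have "y^2 = c^2 + 5" using eq c_def by simp
  hence "c^2 < y^2" by simp
  hence "c < y" using pos c7 by (meson power_less_imp_less_base order_trans zero_le_numeral le_less linorder_not_le order.strict_trans2 zero_le_one)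
  hence "c + 1 \<le> y" by simp
  hence "(c+1)^2 \<le> y^2" using c7 by (simp add: power_mono)
  moreover have "(c+1)^2 = c^2 + 2*c + 1" by algebra
  ultimately show False using \<open>y^2 = c^2 + 5\<close> c7 by linarith
qed

end
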